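(* Let $\Gamma=(G,\sigma)$, $G=(V,E)$, be a signed graph and $f:V\to\mathbb R$ a function not identically zero. Then for any three pairwise distinct weak nodal domains $D_1,D_2,D_3$ of $f$, $D_1\cap D_2\cap D_3=\emptyset$ (as vertex sets).
   Context: A signed graph is a finite simple undirected graph $G=(V,E)$ with $\sigma:E\to\{+1,-1\}$. A walk is $y_1,\dots,y_m$ ($m\ge2$) with consecutive vertices adjacent. For $f:V\to\mathbb R$, a W-walk of $f$ is a walk such that for any two consecutive nonzeros $y_i,y_j$ along it ($i<j$, $f(y_i)\ne0\ne f(y_j)$, $f(y_l)=0$ for $i<l<j$) one has $f(y_i)\sigma_{y_iy_{i+1}}\cdots\sigma_{y_{j-1}y_j}f(y_j)>0$. On $\Omega=\{x:f(x)\ne0\}$ the relation "$x=y$ or a W-walk connects $x$ and $y$" is an equivalence relation with classes $W_1,\dots,W_q$; the weak nodal domains of $f$ are the induced subgraphs on $W_i^0=W_i\cup\{x\in V:\text{there is a W-walk from } x \text{ to some vertex of } W_i\}$. *)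

theory Defs
  imports Complex_Main
begin

definition signed_graph :: "'a set \<Rightarrow> 'a set set \<Rightarrow> ('a set \<Rightarrow> real) \<Rightarrow> bool" where
  "signed_graph V E \<sigma> \<longleftrightarrow> finite V \<and>
     (\<forall>e\<in>E. \<exists>u v. u \<in> V \<and> v \<in> V \<and> u \<noteq> v \<and> e = {u, v}) \<and>
     (\<forall>e\<in>E. \<sigma> e = 1 \<or> \<sigma> e = -1)"

definition is_walk :: "'a set set \<Rightarrow> 'a list \<Rightarrow> bool" where
  "is_walk E ys \<longleftrightarrow> length ys \<ge> 2 \<and>
     (\<forall>k. Suc k < length ys \<longrightarrow> {ys ! k, ys ! Suc k} \<in> E)"

definition is_W_walk :: "'a set set \<Rightarrow> ('a set \<Rightarrow> real) \<Rightarrow> ('a \<Rightarrow> real) \<Rightarrow> 'a list \<Rightarrow> bool" where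
  "is_W_walk E \<sigma> f ys \<longleftrightarrow> is_walk E ys \<and>
     (\<forall>i j. i < j \<and> j < length ys \<and> f (ys ! i) \<noteq> 0 \<and> f (ys ! j) \<noteq> 0 \<and>
        (\<forall>l. i < l \<and> l < j \<longrightarrow> f (ys ! l) = 0) \<longrightarrow>
        f (ys ! i) * (\<Prod>k\<in>{i..<j}. \<sigma> {ys ! k, ys ! Suc k}) * f (ys ! j) > 0)"

definition W_connected :: "'a set set \<Rightarrow> ('a set \<Rightarrow> real) \<Rightarrow> ('a \<Rightarrow> real) \<Rightarrow> 'a \<Rightarrow> 'a \<Rightarrow> bool" where
  "W_connected E \<sigma> f x y \<longleftrightarrow> (\<exists>ys. is_W_walk E \<sigma> f ys \<and> hd ys = x \<and> last ys = y)"

definition nonzero_set :: "'a set \<Rightarrow> ('a \<Rightarrow> real) \<Rightarrow> 'a set" where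
  "nonzero_set V f = {x \<in> V. f x \<noteq> 0}"

definition W_rel :: "'a set \<Rightarrow> 'a set set \<Rightarrow> ('a set \<Rightarrow> real) \<Rightarrow> ('a \<Rightarrow> real) \<Rightarrow> ('a \<times> 'a) set" where
  "W_rel V E \<sigma> f = {(x, y). x \<in> nonzero_set V f \<and> y \<in> nonzero_set V f \<and>
       (x = y \<or> W_connected E \<sigma> f x y)}"

definition W_classes :: "'a set \<Rightarrow> 'a set set \<Rightarrow> ('a set \<Rightarrow> real) \<Rightarrow> ('a \<Rightarrow> real) \<Rightarrow> 'a set set" where
  "W_classes V E \<sigma> f = nonzero_set V f // W_rel V E \<sigma> f"

definition W_closure :: "'a set \<Rightarrow> 'a set set \<Rightarrow> ('a set \<Rightarrow> real) \<Rightarrow> ('a \<Rightarrow> real) \<Rightarrow> 'a set \<Rightarrow> 'a set" where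
  "W_closure V E \<sigma> f W = W \<union> {x \<in> V. \<exists>y\<in>W. W_connected E \<sigma> f x y}"

definition weak_nodal_domains :: "'a set \<Rightarrow> 'a set set \<Rightarrow> ('a set \<Rightarrow> real) \<Rightarrow> ('a \<Rightarrow> real) \<Rightarrow> 'a set set" where
  "weak_nodal_domains V E \<sigma> f = W_closure V E \<sigma> f ` W_classes V E \<sigma> f"

end

theory Submission
  imports Defs
begin


definition sp :: "('a set \<Rightarrow> real) \<Rightarrow> 'a list \<Rightarrow> nat \<Rightarrow> nat \<Rightarrow> real" where
  "sp \<sigma> ys i j = (\<Prod>k\<in>{i..<j}. \<sigma> {ys ! k, ys ! Suc k})"

lemma sp_shift:
  assumes "\<And>k. i \<le> k \<Longrightarrow> k \<le> j \<Longrightarrow> xs ! (k + d) = ys ! k"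
  shows "sp \<sigma> xs (i + d) (j + d) = sp \<sigma> ys i j"
proof -
  have "sp \<sigma> xs (i+d) (j+d) = (\<Prod>k\<in>{i..<j}. \<sigma> {xs ! (k+d), xs ! Suc (k+d)})"
    unfolding sp_def by (rule prod.shift_bounds_nat_ivl)
  also have "\<dots> = sp \<sigma> ys i j" unfolding sp_def
  proof (rule prod.cong)
    fix k assume "k \<in> {i..<j}"
    then have "xs!(k+d) = ys!k" "xs!(Suc k + d) = ys!Suc k" using assms[of k] assms[of "Suc k"] by auto
    then show "\<sigma> {xs!(k+d), xs!Suc(k+d)} = \<sigma> {ys!k, ys!Suc k}" by simp
  qed simp
  finally show ?thesis .
qed

lemma sp_same:
  assumes "\<And>k. i \<le> k \<Longrightarrow> k \<le> j \<Longrightarrow> xs ! k = ys ! k"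
  shows "sp \<sigma> xs i j = sp \<sigma> ys i j"
  using sp_shift[of i j xs 0 ys \<sigma>] assms by simp

lemma sp_rev:
  assumes "j < length ys" "i \<le> j"
  shows "sp \<sigma> (rev ys) i j = sp \<sigma> ys (length ys - 1 - j) (length ys - 1 - i)"
  unfolding sp_def
proof (rule prod.reindex_bij_witness[of _ "\<lambda>k. length ys - 2 - k" "\<lambda>k. length ys - 2 - k"])
  fix a assume a: "a \<in> {i..<j}"
  then show "length ys - 2 - (length ys - 2 - a) = a" using assms by auto
  show "length ys - 2 - a \<in> {length ys - 1 - j..<length ys - 1 - i}" using a assms by auto
  have "length ys - 2 - a + 1 = length ys - Suc a" using a assms by auto
  then have e1: "rev ys ! a = ys ! (length ys - 2 - a + 1)" using a assms by (auto simp: rev_nth)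
  have e2: "rev ys ! Suc a = ys ! (length ys - 2 - a)" using a assms by (auto simp: rev_nth)
  show "\<sigma> {ys ! (length ys - 2 - a), ys ! Suc (length ys - 2 - a)} = \<sigma> {rev ys ! a, rev ys ! Suc a}"
    using e1 e2 by (simp add: insert_commute)
next
  fix b assume b: "b \<in> {length ys - 1 - j..<length ys - 1 - i}"
  then show "length ys - 2 - (length ys - 2 - b) = b" using assms by auto
  show "length ys - 2 - b \<in> {i..<j}" using b assms by auto
qed

lemma walk_rev: "is_walk E ys \<Longrightarrow> is_walk E (rev ys)"
  unfolding is_walk_def
proof (intro conjI allI impI)
  fix k assume h: "2 \<le> length ys \<and> (\<forall>k. Suc k < length ys \<longrightarrow> {ys ! k, ys ! Suc k} \<in> E)"
    and k: "Suc k < length (rev ys)"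
  then have "{ys ! (length ys - 2 - k), ys ! Suc (length ys - 2 - k)} \<in> E" by auto
  moreover have "rev ys ! k = ys ! Suc (length ys - 2 - k)" "rev ys ! Suc k = ys ! (length ys - 2 - k)"
    using k by (auto simp: rev_nth Suc_diff_Suc)
  ultimately show "{rev ys ! k, rev ys ! Suc k} \<in> E" by (simp add: insert_commute)
qed auto

lemma walk_app:
  assumes "is_walk E xs" "is_walk E ys" "last xs = hd ys"
  shows "is_walk E (butlast xs @ ys)"
  unfolding is_walk_def
proof (intro conjI allI impI)
  let ?c = "length xs - 1"
  have lx: "length xs \<ge> 2" and ly: "length ys \<ge> 2" using assms unfolding is_walk_def by auto
  show "2 \<le> length (butlast xs @ ys)" using ly by simp
  fix k assume k: "Suc k < length (butlast xs @ ys)"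
  have n1: "(butlast xs @ ys) ! m = xs ! m" if "m \<le> ?c" for m
  proof (cases "m < ?c")
    case True then show ?thesis by (simp add: nth_append nth_butlast)
  next
    case False then have "m = ?c" using that by simp
    moreover have "xs \<noteq> []" "ys \<noteq> []" using lx ly by auto
    ultimately show ?thesis using assms(3) lx
      by (simp add: nth_append last_conv_nth hd_conv_nth)
  qed
  have n2: "(butlast xs @ ys) ! m = ys ! (m - ?c)" if "m \<ge> ?c" for m
    using that lx by (simp add: nth_append)
  show "{(butlast xs @ ys) ! k, (butlast xs @ ys) ! Suc k} \<in> E"
  proof (cases "Suc k \<le> ?c")
    case True then show ?thesis using n1[of k] n1[of "Suc k"] assms(1) lx unfolding is_walk_def by auto
  next
    case False
    then have "Suc (k - ?c) = Suc k - ?c" "Suc (k - ?c) < length ys" using k lx by auto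
    then have "{ys ! (k - ?c), ys ! Suc (k - ?c)} \<in> E" using assms(2) unfolding is_walk_def by blast
    then show ?thesis using n2[of k] n2[of "Suc k"] False \<open>Suc (k - ?c) = Suc k - ?c\<close> by auto
  qed
qed

lemma W_rev:
  assumes "is_W_walk E \<sigma> f ys"
  shows "is_W_walk E \<sigma> f (rev ys)"
  unfolding is_W_walk_def
proof (intro conjI allI impI)
  show "is_walk E (rev ys)" using assms walk_rev unfolding is_W_walk_def by blast
  fix i j
  assume h: "i < j \<and> j < length (rev ys) \<and> f (rev ys ! i) \<noteq> 0 \<and> f (rev ys ! j) \<noteq> 0 \<and>
        (\<forall>l. i < l \<and> l < j \<longrightarrow> f (rev ys ! l) = 0)"
  define m where "m = length ys"
  have jm: "j < m" using h m_def by simp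
  have r: "rev ys ! k = ys ! (m - 1 - k)" if "k < m" for k using that m_def by (simp add: rev_nth)
  have a1: "rev ys ! i = ys ! (m - 1 - i)" "rev ys ! j = ys ! (m - 1 - j)" using r h jm by auto
  have z: "\<forall>l. m - 1 - j < l \<and> l < m - 1 - i \<longrightarrow> f (ys ! l) = 0"
  proof (intro allI impI)
    fix l assume l: "m - 1 - j < l \<and> l < m - 1 - i"
    then have "rev ys ! (m - 1 - l) = ys ! l" using r[of "m - 1 - l"] jm by auto
    moreover have "i < m - 1 - l \<and> m - 1 - l < j" using l jm by auto
    ultimately show "f (ys ! l) = 0" using h by metis
  qed
  have "m - 1 - j < m - 1 - i" "m - 1 - i < length ys" using h jm m_def by auto
  then have "f (ys ! (m - 1 - j)) * (\<Prod>k\<in>{m - 1 - j..<m - 1 - i}. \<sigma> {ys ! k, ys ! Suc k}) * f (ys ! (m - 1 - i)) > 0"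
    using assms z h a1 unfolding is_W_walk_def by auto
  moreover have "sp \<sigma> (rev ys) i j = sp \<sigma> ys (m - 1 - j) (m - 1 - i)"
    using sp_rev[of j ys i \<sigma>] h m_def by simp
  ultimately show "f (rev ys ! i) * (\<Prod>k\<in>{i..<j}. \<sigma> {rev ys ! k, rev ys ! Suc k}) * f (rev ys ! j) > 0"
    using a1 unfolding sp_def by (simp add: mult_ac)
qed

lemma W_app:
  assumes "is_W_walk E \<sigma> f xs" "is_W_walk E \<sigma> f ys" "last xs = hd ys" "f (hd ys) \<noteq> 0"
  shows "is_W_walk E \<sigma> f (butlast xs @ ys)"
  unfolding is_W_walk_def
proof (intro conjI allI impI)
  show "is_walk E (butlast xs @ ys)" using assms walk_app unfolding is_W_walk_def by blast
  let ?c = "length xs - 1"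
  let ?z = "butlast xs @ ys"
  have lx: "length xs \<ge> 2" and ly: "length ys \<ge> 2" using assms unfolding is_W_walk_def is_walk_def by auto
  have n1: "?z ! m = xs ! m" if "m \<le> ?c" for m
  proof (cases "m < ?c")
    case True then show ?thesis by (simp add: nth_append nth_butlast)
  next
    case False then have "m = ?c" using that by simp
    moreover have "xs \<noteq> []" "ys \<noteq> []" using lx ly by auto
    ultimately show ?thesis using assms(3) lx
      by (simp add: nth_append last_conv_nth hd_conv_nth)
  qed
  have n2: "?z ! (m + ?c) = ys ! m" for m
    using nth_append_length_plus[of "butlast xs" ys m] by (simp add: add.commute)
  have "hd ys = ys ! 0" using ly by (cases ys) auto
  then have zc: "f (?z ! ?c) \<noteq> 0" using n2[of 0] assms(4) by simp
  have len: "length ?z = ?c + length ys" using lx by simp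
  fix i j
  assume h: "i < j \<and> j < length ?z \<and> f (?z ! i) \<noteq> 0 \<and> f (?z ! j) \<noteq> 0 \<and>
        (\<forall>l. i < l \<and> l < j \<longrightarrow> f (?z ! l) = 0)"
  show "f (?z ! i) * (\<Prod>k\<in>{i..<j}. \<sigma> {?z ! k, ?z ! Suc k}) * f (?z ! j) > 0"
  proof (cases "j \<le> ?c")
    case True
    have "sp \<sigma> ?z i j = sp \<sigma> xs i j" using n1 True by (intro sp_same) auto
    moreover have "f (xs ! i) * sp \<sigma> xs i j * f (xs ! j) > 0"
    proof -
      have "i < j" "j < length xs" using h True lx by auto
      moreover have "f (xs ! i) \<noteq> 0" "f (xs ! j) \<noteq> 0" using h True n1[of i] n1[of j] by auto
      moreover have "\<forall>l. i < l \<and> l < j \<longrightarrow> f (xs ! l) = 0"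
      proof (intro allI impI)
        fix l assume "i < l \<and> l < j"
        then show "f (xs ! l) = 0" using h n1[of l] True by auto
      qed
      ultimately show ?thesis using assms(1) unfolding is_W_walk_def sp_def by blast
    qed
    ultimately show ?thesis using n1[of i] n1[of j] True h unfolding sp_def by simp
  next
    case False
    show ?thesis
    proof (cases "i \<ge> ?c")
      case True
      define i' where "i' = i - ?c"
      define j' where "j' = j - ?c"
      have ii: "i = i' + ?c" "j = j' + ?c" using True False i'_def j'_def by auto
      have "sp \<sigma> ?z (i' + ?c) (j' + ?c) = sp \<sigma> ys i' j'" using n2 by (intro sp_shift) auto
      moreover have "f (ys ! i') * sp \<sigma> ys i' j' * f (ys ! j') > 0"
      proof -
        have "i' < j'" "j' < length ys" using h ii len by auto
        moreover have "f (ys ! i') \<noteq> 0" "f (ys ! j') \<noteq> 0" using h ii n2 by metis+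
        moreover have "\<forall>l. i' < l \<and> l < j' \<longrightarrow> f (ys ! l) = 0"
        proof (intro allI impI)
          fix l assume "i' < l \<and> l < j'"
          then have "i < l + ?c \<and> l + ?c < j" using ii by auto
          then show "f (ys ! l) = 0" using h n2[of l] by metis
        qed
        ultimately show ?thesis using assms(2) unfolding is_W_walk_def sp_def by blast
      qed
      ultimately show ?thesis using n2[of i'] n2[of j'] ii unfolding sp_def by simp
    next
      case False2: False
      then have "i < ?c" "?c < j" using False by auto
      then show ?thesis using h zc by blast
    qed
  qed
qed

lemma W_drop:
  assumes "is_W_walk E \<sigma> f ys" "p + 2 \<le> length ys"
  shows "is_W_walk E \<sigma> f (drop p ys)"
  unfolding is_W_walk_def is_walk_def
proof (intro conjI allI impI)
  let ?z = "drop p ys"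
  have n: "?z ! k = ys ! (k + p)" for k using assms(2) by (simp add: add.commute)
  show "2 \<le> length ?z" using assms by simp
  fix k assume "Suc k < length ?z"
  then have "Suc (k + p) < length ys" by simp
  then show "{?z ! k, ?z ! Suc k} \<in> E" using assms(1) n[of k] n[of "Suc k"]
    unfolding is_W_walk_def is_walk_def by simp
next
  let ?z = "drop p ys"
  have n: "?z ! k = ys ! (k + p)" for k using assms(2) by (simp add: add.commute)
  fix i j
  assume h: "i < j \<and> j < length ?z \<and> f (?z ! i) \<noteq> 0 \<and> f (?z ! j) \<noteq> 0 \<and>
        (\<forall>l. i < l \<and> l < j \<longrightarrow> f (?z ! l) = 0)"
  have "sp \<sigma> ys (i + p) (j + p) = sp \<sigma> ?z i j" using n by (intro sp_shift) auto
  moreover have "f (ys ! (i+p)) * sp \<sigma> ys (i+p) (j+p) * f (ys ! (j+p)) > 0"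
  proof -
    have "i + p < j + p" "j + p < length ys" using h by auto
    moreover have "f (ys ! (i+p)) \<noteq> 0" "f (ys ! (j+p)) \<noteq> 0" using h n by metis+
    moreover have "\<forall>l. i + p < l \<and> l < j + p \<longrightarrow> f (ys ! l) = 0"
    proof (intro allI impI)
      fix l assume "i + p < l \<and> l < j + p"
      then have "i < l - p \<and> l - p < j" "l - p + p = l" by auto
      then show "f (ys ! l) = 0" using h n[of "l - p"] by metis
    qed
    ultimately show ?thesis using assms(1) unfolding is_W_walk_def sp_def by blast
  qed
  ultimately show "f (?z ! i) * (\<Prod>k\<in>{i..<j}. \<sigma> {?z ! k, ?z ! Suc k}) * f (?z ! j) > 0"
    using n[of i] n[of j] unfolding sp_def by simp
qed

lemma W_take:
  assumes "is_W_walk E \<sigma> f ys" "2 \<le> n" "n \<le> length ys"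
  shows "is_W_walk E \<sigma> f (take n ys)"
  unfolding is_W_walk_def is_walk_def
proof (intro conjI allI impI)
  let ?z = "take n ys"
  show "2 \<le> length ?z" using assms by simp
  fix k assume "Suc k < length ?z"
  then show "{?z ! k, ?z ! Suc k} \<in> E" using assms(1)
    unfolding is_W_walk_def is_walk_def by simp
next
  let ?z = "take n ys"
  fix i j
  assume h: "i < j \<and> j < length ?z \<and> f (?z ! i) \<noteq> 0 \<and> f (?z ! j) \<noteq> 0 \<and>
        (\<forall>l. i < l \<and> l < j \<longrightarrow> f (?z ! l) = 0)"
  have "sp \<sigma> ?z i j = sp \<sigma> ys i j" using h by (intro sp_same) auto
  moreover have "f (ys ! i) * sp \<sigma> ys i j * f (ys ! j) > 0"
    using h assms(1) unfolding is_W_walk_def sp_def by auto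
  ultimately show "f (?z ! i) * (\<Prod>k\<in>{i..<j}. \<sigma> {?z ! k, ?z ! Suc k}) * f (?z ! j) > 0"
    using h unfolding sp_def by simp
qed

lemma walk_in_V:
  assumes "signed_graph V E \<sigma>" "is_walk E ys"
  shows "set ys \<subseteq> V"
proof
  fix x assume "x \<in> set ys"
  then obtain k where k: "k < length ys" "ys ! k = x" by (auto simp: in_set_conv_nth)
  have edge: "\<And>a b. {a, b} \<in> E \<Longrightarrow> a \<in> V \<and> b \<in> V"
  proof -
    fix a b assume "{a, b} \<in> E"
    then obtain u v where "u \<in> V" "v \<in> V" "{a, b} = {u, v}" using assms(1) unfolding signed_graph_def by blast
    then show "a \<in> V \<and> b \<in> V" by (metis doubleton_eq_iff)
  qed
  show "x \<in> V"
  proof (cases "Suc k < length ys")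
    case True then show ?thesis using assms(2) edge k unfolding is_walk_def by blast
  next
    case False
    then have "Suc (k - 1) < length ys" "Suc (k - 1) = k" using assms(2) k unfolding is_walk_def by auto
    then show ?thesis using assms(2) edge k unfolding is_walk_def by metis
  qed
qed

lemma W_conn_V:
  assumes "signed_graph V E \<sigma>" "W_connected E \<sigma> f x y"
  shows "x \<in> V" "y \<in> V"
proof -
  obtain ys where ys: "is_W_walk E \<sigma> f ys" "hd ys = x" "last ys = y"
    using assms(2) unfolding W_connected_def by blast
  then have "ys \<noteq> []" unfolding is_W_walk_def is_walk_def by auto
  then have "x \<in> set ys" "y \<in> set ys" using ys by auto
  then show "x \<in> V" "y \<in> V" using walk_in_V[OF assms(1)] ys unfolding is_W_walk_def by auto
qed

lemma sp_nz:
  assumes "signed_graph V E \<sigma>" "is_walk E ys" "j < length ys"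
  shows "sp \<sigma> ys i j \<noteq> 0"
  unfolding sp_def
proof (subst prod_zero_iff, simp, clarify)
  fix k assume k: "k \<in> {i..<j}" and z: "\<sigma> {ys ! k, ys ! Suc k} = 0"
  have "{ys ! k, ys ! Suc k} \<in> E" using assms k unfolding is_walk_def by auto
  then show False using z assms(1) unfolding signed_graph_def by fastforce
qed

lemma W_equiv:
  assumes "signed_graph V E \<sigma>"
  shows "equiv (nonzero_set V f) (W_rel V E \<sigma> f)"
proof (rule equivI)
  show "W_rel V E \<sigma> f \<subseteq> nonzero_set V f \<times> nonzero_set V f"
    unfolding W_rel_def by blast
  show "refl_on (nonzero_set V f) (W_rel V E \<sigma> f)"
    unfolding refl_on_def W_rel_def by blast
  show "sym (W_rel V E \<sigma> f)"
  proof (rule symI)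
    fix a b assume "(a, b) \<in> W_rel V E \<sigma> f"
    moreover have "W_connected E \<sigma> f b a" if wc: "W_connected E \<sigma> f a b"
    proof -
      obtain ys where ys: "is_W_walk E \<sigma> f ys" "hd ys = a" "last ys = b"
        using wc unfolding W_connected_def by blast
      then have "is_W_walk E \<sigma> f (rev ys)" "hd (rev ys) = b" "last (rev ys) = a"
        using W_rev by (auto simp: hd_rev last_rev)
      then show ?thesis unfolding W_connected_def by blast
    qed
    ultimately show "(b, a) \<in> W_rel V E \<sigma> f"
      unfolding W_rel_def by auto
  qed
  show "trans (W_rel V E \<sigma> f)"
  proof (rule transI)
    fix a b c assume ab: "(a, b) \<in> W_rel V E \<sigma> f" and bc: "(b, c) \<in> W_rel V E \<sigma> f"
    show "(a, c) \<in> W_rel V E \<sigma> f"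
    proof (cases "a = b \<or> b = c")
      case True then show ?thesis using ab bc by auto
    next
      case False
      then obtain xs ys where xs: "is_W_walk E \<sigma> f xs" "hd xs = a" "last xs = b"
        and ys: "is_W_walk E \<sigma> f ys" "hd ys = b" "last ys = c"
        using ab bc unfolding W_rel_def W_connected_def by auto
      have bnz: "f b \<noteq> 0" using ab unfolding W_rel_def nonzero_set_def by auto
      have w: "is_W_walk E \<sigma> f (butlast xs @ ys)" using W_app[OF xs(1) ys(1)] xs ys bnz by simp
      have lx: "length xs \<ge> 2" "length ys \<ge> 2" using xs ys unfolding is_W_walk_def is_walk_def by auto
      then have "butlast xs \<noteq> []" by (cases xs) auto
      moreover have "xs \<noteq> []" using lx by auto
      ultimately have "hd (butlast xs @ ys) = a" using xs lx
        by (simp add: hd_append2 hd_conv_nth nth_butlast nth_append)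
      moreover have "ys \<noteq> []" using lx by auto
      then have "last (butlast xs @ ys) = c" using ys by simp
      ultimately show ?thesis using w ab bc unfolding W_rel_def W_connected_def by auto
    qed
  qed
qed



lemma app_nth1:
  assumes "xs \<noteq> []" "ys \<noteq> []" "last xs = hd ys" "m \<le> length xs - 1"
  shows "(butlast xs @ ys) ! m = xs ! m"
proof (cases "m < length xs - 1")
  case True then show ?thesis by (simp add: nth_append nth_butlast)
next
  case False then have "m = length xs - 1" using assms by simp
  then show ?thesis using assms
    by (simp add: nth_append last_conv_nth hd_conv_nth)
qed

lemma app_nth2: "(butlast xs @ ys) ! (m + (length xs - 1)) = ys ! m"
  using nth_append_length_plus[of "butlast xs" ys m] by (simp add: add.commute)

lemma first_nz:
  assumes "is_W_walk E \<sigma> f ys" "f (hd ys) = 0" "f (last ys) \<noteq> 0"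
  shows "\<exists>A. is_walk E A \<and> hd A = hd ys \<and> (\<forall>k. k < length A - 1 \<longrightarrow> f (A ! k) = 0) \<and>
     f (last A) \<noteq> 0 \<and> (last A = last ys \<or> W_connected E \<sigma> f (last A) (last ys))"
proof -
  define n where "n = length ys"
  have n2: "n \<ge> 2" using assms(1) unfolding n_def is_W_walk_def is_walk_def by auto
  then have ne: "ys \<noteq> []" unfolding n_def by auto
  have lst: "last ys = ys ! (n - 1)" using ne n_def by (simp add: last_conv_nth)
  have hd0: "hd ys = ys ! 0" using ne by (simp add: hd_conv_nth)
  define p where "p = (LEAST k. f (ys ! k) \<noteq> 0)"
  have fp: "f (ys ! p) \<noteq> 0" unfolding p_def using LeastI[of "\<lambda>k. f (ys ! k) \<noteq> 0" "n - 1"] assms(3) lst by simp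
  have pn: "p \<le> n - 1" unfolding p_def using Least_le[of "\<lambda>k. f (ys ! k) \<noteq> 0" "n - 1"] assms(3) lst by simp
  have p0: "p \<noteq> 0" using fp assms(2) hd0 by (cases "p = 0") auto
  have zer: "f (ys ! k) = 0" if "k < p" for k using that not_less_Least[of k "\<lambda>k. f (ys ! k) \<noteq> 0"] unfolding p_def by simp
  define A where "A = take (Suc p) ys"
  have lA: "length A = Suc p" using pn n2 unfolding A_def n_def by auto
  have "is_W_walk E \<sigma> f A" unfolding A_def using W_take[OF assms(1), of "Suc p"] pn p0 n2 unfolding n_def by simp
  then have wA: "is_walk E A" unfolding is_W_walk_def by simp
  have nA: "A ! k = ys ! k" if "k \<le> p" for k using that unfolding A_def by simp
  have "A \<noteq> []" using lA by auto
  then have hA: "hd A = hd ys" "last A = ys ! p" using nA[of 0] nA[of p] hd0 lA by (auto simp: hd_conv_nth last_conv_nth)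
  have zA: "\<forall>k. k < length A - 1 \<longrightarrow> f (A ! k) = 0" using zer nA lA by auto
  have "last A = last ys \<or> W_connected E \<sigma> f (last A) (last ys)"
  proof (cases "p = n - 1")
    case True then show ?thesis using hA lst by simp
  next
    case False
    then have "p + 2 \<le> length ys" using pn n_def by auto
    then have "is_W_walk E \<sigma> f (drop p ys)" "hd (drop p ys) = ys ! p" "last (drop p ys) = last ys"
      using W_drop[OF assms(1)] by (simp_all add: hd_drop_conv_nth)
    then show ?thesis using hA unfolding W_connected_def by auto
  qed
  then show ?thesis using wA hA zA fp by auto
qed

lemma bridge:
  assumes w1: "is_walk E A1" and w2: "is_walk E A2" and hh: "hd A1 = hd A2"
    and z1: "\<forall>k. k < length A1 - 1 \<longrightarrow> f (A1 ! k) = 0"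
    and z2: "\<forall>k. k < length A2 - 1 \<longrightarrow> f (A2 ! k) = 0"
    and nz1: "f (last A1) \<noteq> 0" and nz2: "f (last A2) \<noteq> 0"
    and pos: "(f (last A1) * sp \<sigma> A1 0 (length A1 - 1)) * (f (last A2) * sp \<sigma> A2 0 (length A2 - 1)) > 0"
  shows "W_connected E \<sigma> f (last A1) (last A2)"
proof -
  define R where "R = rev A1"
  define c where "c = length A1 - 1"
  define p2 where "p2 = length A2 - 1"
  define B where "B = butlast R @ A2"
  have l1: "length A1 \<ge> 2" and l2: "length A2 \<ge> 2" using w1 w2 unfolding is_walk_def by auto
  then have ne: "R \<noteq> []" "A2 \<noteq> []" "A1 \<noteq> []" unfolding R_def by auto
  have lR: "last R = hd A2" using ne hh unfolding R_def by (simp add: last_rev)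
  have lRl: "length R = length A1" unfolding R_def by simp
  have wB: "is_walk E B" unfolding B_def R_def using walk_app[OF walk_rev[OF w1] w2] lR R_def by simp
  have b1: "B ! m = A1 ! (c - m)" if "m \<le> c" for m
  proof -
    have "B ! m = R ! m" unfolding B_def using app_nth1[OF ne(1,2) lR] that lRl c_def by simp
    also have "\<dots> = A1 ! (c - m)" unfolding R_def using that c_def l1 by (simp add: rev_nth)
    finally show ?thesis .
  qed
  have b2: "B ! (m + c) = A2 ! m" for m unfolding B_def c_def using app_nth2[of R A2 m] lRl by simp
  have lB: "length B = c + p2 + 1" unfolding B_def p2_def c_def using lRl l1 l2 ne by auto
  have "B \<noteq> []" using lB by auto
  then have hB: "hd B = last A1" using b1[of 0] ne by (simp add: hd_conv_nth last_conv_nth c_def)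
  have laB: "last B = last A2" unfolding B_def using ne by simp
  have lastB: "B ! (c + p2) = last A2" using b2[of p2] ne by (simp add: last_conv_nth p2_def add.commute)
  have zB: "f (B ! k) = 0" if "0 < k" "k < c + p2" for k
  proof (cases "k \<le> c")
    case True then show ?thesis using b1[of k] z1 that c_def by auto
  next
    case False
    then have "B ! k = A2 ! (k - c)" using b2[of "k - c"] by simp
    then show ?thesis using z2 that False p2_def by auto
  qed
  have "is_W_walk E \<sigma> f B"
    unfolding is_W_walk_def
  proof (intro conjI allI impI)
    show "is_walk E B" by (rule wB)
    fix i j
    assume h: "i < j \<and> j < length B \<and> f (B ! i) \<noteq> 0 \<and> f (B ! j) \<noteq> 0 \<and>
        (\<forall>l. i < l \<and> l < j \<longrightarrow> f (B ! l) = 0)"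
    have i0: "i = 0"
    proof (rule ccontr)
      assume "i \<noteq> 0"
      then have "0 < i" "i < c + p2" using h lB by auto
      then show False using zB[of i] h by simp
    qed
    have jL: "j = c + p2"
    proof (rule ccontr)
      assume "j \<noteq> c + p2"
      then have "0 < j" "j < c + p2" using h lB by auto
      then show False using zB[of j] h by simp
    qed
    have "sp \<sigma> B 0 (c + p2) = sp \<sigma> B 0 c * sp \<sigma> B c (c + p2)"
      unfolding sp_def by (simp add: prod.atLeastLessThan_concat)
    moreover have "sp \<sigma> B 0 c = sp \<sigma> A1 0 c"
    proof -
      have "sp \<sigma> B 0 c = sp \<sigma> R 0 c"
        by (rule sp_same) (use app_nth1[OF ne(1,2) lR] lRl c_def in \<open>auto simp: B_def\<close>)
      also have "\<dots> = sp \<sigma> A1 (c - c) (c - 0)" unfolding R_def using sp_rev[of c A1 0 \<sigma>] c_def l1 by simp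
      finally show ?thesis by simp
    qed
    moreover have "sp \<sigma> B (0 + c) (p2 + c) = sp \<sigma> A2 0 p2"
      by (rule sp_shift) (use b2 in auto)
    ultimately have "sp \<sigma> B 0 (c + p2) = sp \<sigma> A1 0 c * sp \<sigma> A2 0 p2" by (simp add: add.commute)
    then show "f (B ! i) * (\<Prod>k\<in>{i..<j}. \<sigma> {B ! k, B ! Suc k}) * f (B ! j) > 0"
      using i0 jL pos hB lastB b1[of 0] c_def p2_def ne unfolding sp_def
      by (simp add: last_conv_nth mult_ac)
  qed
  then show ?thesis using hB laB unfolding W_connected_def by blast
qed



lemma three_signs: fixes a b c :: real
  assumes "a \<noteq> 0" "b \<noteq> 0" "c \<noteq> 0"
  shows "a * b > 0 \<or> a * c > 0 \<or> b * c > 0"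
  using assms by (auto simp: zero_less_mult_iff linorder_neq_iff)

lemma W_rel_sub: "W_rel V E \<sigma> f \<subseteq> nonzero_set V f \<times> nonzero_set V f"
  unfolding W_rel_def by blast

lemma closure_nz:
  assumes sg: "signed_graph V E \<sigma>" and a: "a \<in> nonzero_set V f"
    and z: "z \<in> W_closure V E \<sigma> f (W_rel V E \<sigma> f `` {a})" and fz: "f z \<noteq> 0"
  shows "(a, z) \<in> W_rel V E \<sigma> f"
proof -
  have eq: "equiv (nonzero_set V f) (W_rel V E \<sigma> f)" by (rule W_equiv[OF sg])
  show ?thesis
  proof (cases "z \<in> W_rel V E \<sigma> f `` {a}")
    case True then show ?thesis by simp
  next
    case False
    then obtain y where y: "y \<in> W_rel V E \<sigma> f `` {a}" "z \<in> V" "W_connected E \<sigma> f z y"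
      using z unfolding W_closure_def by blast
    have ay: "(a, y) \<in> W_rel V E \<sigma> f" using y by simp
    then have "y \<in> nonzero_set V f" using W_rel_sub by blast
    moreover have "z \<in> nonzero_set V f" using y fz unfolding nonzero_set_def by simp
    ultimately have "(z, y) \<in> W_rel V E \<sigma> f" using y unfolding W_rel_def by simp
    then have "(y, z) \<in> W_rel V E \<sigma> f" using eq unfolding equiv_def by (meson symD)
    then show ?thesis using ay eq unfolding equiv_def by (meson transD)
  qed
qed

lemma closure_z:
  assumes sg: "signed_graph V E \<sigma>" and a: "a \<in> nonzero_set V f"
    and z: "z \<in> W_closure V E \<sigma> f (W_rel V E \<sigma> f `` {a})" and fz: "f z = 0"
  shows "\<exists>A. is_walk E A \<and> hd A = z \<and> (\<forall>k. k < length A - 1 \<longrightarrow> f (A ! k) = 0) \<and>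
     f (last A) \<noteq> 0 \<and> (a, last A) \<in> W_rel V E \<sigma> f"
proof -
  have eq: "equiv (nonzero_set V f) (W_rel V E \<sigma> f)" by (rule W_equiv[OF sg])
  have "z \<notin> W_rel V E \<sigma> f `` {a}" using W_rel_sub fz unfolding nonzero_set_def by blast
  then obtain y where y: "y \<in> W_rel V E \<sigma> f `` {a}" "W_connected E \<sigma> f z y"
    using z unfolding W_closure_def by blast
  have ay: "(a, y) \<in> W_rel V E \<sigma> f" using y by simp
  then have yN: "y \<in> nonzero_set V f" using W_rel_sub by blast
  obtain ys where ys: "is_W_walk E \<sigma> f ys" "hd ys = z" "last ys = y"
    using y unfolding W_connected_def by blast
  have "f (last ys) \<noteq> 0" using ys yN unfolding nonzero_set_def by simp
  then obtain A where A: "is_walk E A" "hd A = z" "\<forall>k. k < length A - 1 \<longrightarrow> f (A ! k) = 0"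
    "f (last A) \<noteq> 0" "last A = y \<or> W_connected E \<sigma> f (last A) y"
    using first_nz[OF ys(1)] ys fz by auto
  have "A \<noteq> []" using A(1) unfolding is_walk_def by auto
  then have "last A \<in> V" using walk_in_V[OF sg A(1)] by auto
  then have lN: "last A \<in> nonzero_set V f" using A(4) unfolding nonzero_set_def by simp
  have "(last A, y) \<in> W_rel V E \<sigma> f" using A(5) lN yN unfolding W_rel_def by auto
  then have "(y, last A) \<in> W_rel V E \<sigma> f" using eq unfolding equiv_def by (meson symD)
  then have "(a, last A) \<in> W_rel V E \<sigma> f" using ay eq unfolding equiv_def by (meson transD)
  then show ?thesis using A by blast
qed

lemma join:
  assumes sg: "signed_graph V E \<sigma>"
    and A1: "is_walk E A1" "hd A1 = z" "\<forall>k. k < length A1 - 1 \<longrightarrow> f (A1 ! k) = 0"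
     "f (last A1) \<noteq> 0" "(a1, last A1) \<in> W_rel V E \<sigma> f"
    and A2: "is_walk E A2" "hd A2 = z" "\<forall>k. k < length A2 - 1 \<longrightarrow> f (A2 ! k) = 0"
     "f (last A2) \<noteq> 0" "(a2, last A2) \<in> W_rel V E \<sigma> f"
    and pos: "(f (last A1) * sp \<sigma> A1 0 (length A1 - 1)) * (f (last A2) * sp \<sigma> A2 0 (length A2 - 1)) > 0"
  shows "W_rel V E \<sigma> f `` {a1} = W_rel V E \<sigma> f `` {a2}"
proof -
  have eq: "equiv (nonzero_set V f) (W_rel V E \<sigma> f)" by (rule W_equiv[OF sg])
  have wc: "W_connected E \<sigma> f (last A1) (last A2)"
    using bridge[OF A1(1) A2(1) _ A1(3) A2(3) A1(4) A2(4) pos] A1(2) A2(2) by simp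
  have "last A1 \<in> nonzero_set V f" "last A2 \<in> nonzero_set V f"
    using A1(5) A2(5) W_rel_sub by blast+
  then have r: "(last A1, last A2) \<in> W_rel V E \<sigma> f" using wc unfolding W_rel_def by simp
  have "W_rel V E \<sigma> f `` {a1} = W_rel V E \<sigma> f `` {last A1}" using equiv_class_eq[OF eq A1(5)] .
  also have "\<dots> = W_rel V E \<sigma> f `` {last A2}" using equiv_class_eq[OF eq r] .
  also have "\<dots> = W_rel V E \<sigma> f `` {a2}" using equiv_class_eq[OF eq A2(5)] by simp
  finally show ?thesis .
qed

lemma sgn_nz:
  assumes sg: "signed_graph V E \<sigma>" "is_walk E A" "f (last A) \<noteq> 0"
  shows "f (last A) * sp \<sigma> A 0 (length A - 1) \<noteq> 0"
proof -
  have "length A \<ge> 2" using assms(2) unfolding is_walk_def by simp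
  then have "sp \<sigma> A 0 (length A - 1) \<noteq> 0" using sp_nz[OF assms(1,2)] by simp
  then show ?thesis using assms(3) by simp
qed

theorem proposition3p8:
  fixes V :: "'a set" and E :: "'a set set" and \<sigma> :: "'a set \<Rightarrow> real" and f :: "'a \<Rightarrow> real"
  assumes "signed_graph V E \<sigma>"
    and "\<exists>x\<in>V. f x \<noteq> 0"
    and "D1 \<in> weak_nodal_domains V E \<sigma> f"
    and "D2 \<in> weak_nodal_domains V E \<sigma> f"
    and "D3 \<in> weak_nodal_domains V E \<sigma> f"
    and "D1 \<noteq> D2" and "D1 \<noteq> D3" and "D2 \<noteq> D3"
  shows "D1 \<inter> D2 \<inter> D3 = {}"
proof (rule ccontr)
  assume "D1 \<inter> D2 \<inter> D3 \<noteq> {}"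
  then obtain z where z: "z \<in> D1" "z \<in> D2" "z \<in> D3" by blast
  let ?R = "W_rel V E \<sigma> f"
  let ?N = "nonzero_set V f"
  have eq: "equiv ?N ?R" by (rule W_equiv[OF assms(1)])
  obtain a1 where a1: "a1 \<in> ?N" "D1 = W_closure V E \<sigma> f (?R `` {a1})"
    using assms(3) unfolding weak_nodal_domains_def W_classes_def by (auto elim!: quotientE)
  obtain a2 where a2: "a2 \<in> ?N" "D2 = W_closure V E \<sigma> f (?R `` {a2})"
    using assms(4) unfolding weak_nodal_domains_def W_classes_def by (auto elim!: quotientE)
  obtain a3 where a3: "a3 \<in> ?N" "D3 = W_closure V E \<sigma> f (?R `` {a3})"
    using assms(5) unfolding weak_nodal_domains_def W_classes_def by (auto elim!: quotientE)
  have d12: "?R `` {a1} \<noteq> ?R `` {a2}" using assms(6) a1 a2 by auto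
  have d13: "?R `` {a1} \<noteq> ?R `` {a3}" using assms(7) a1 a3 by auto
  have d23: "?R `` {a2} \<noteq> ?R `` {a3}" using assms(8) a2 a3 by auto
  show False
  proof (cases "f z = 0")
    case False
    have "(a1, z) \<in> ?R" using closure_nz[OF assms(1) a1(1)] z a1 False by simp
    moreover have "(a2, z) \<in> ?R" using closure_nz[OF assms(1) a2(1)] z a2 False by simp
    ultimately have "?R `` {a1} = ?R `` {a2}"
      using equiv_class_eq[OF eq] by (metis)
    then show False using d12 by simp
  next
    case True
    obtain A1 where A1: "is_walk E A1" "hd A1 = z" "\<forall>k. k < length A1 - 1 \<longrightarrow> f (A1 ! k) = 0"
     "f (last A1) \<noteq> 0" "(a1, last A1) \<in> ?R"
      using closure_z[OF assms(1) a1(1)] z a1 True by auto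
    obtain A2 where A2: "is_walk E A2" "hd A2 = z" "\<forall>k. k < length A2 - 1 \<longrightarrow> f (A2 ! k) = 0"
     "f (last A2) \<noteq> 0" "(a2, last A2) \<in> ?R"
      using closure_z[OF assms(1) a2(1)] z a2 True by auto
    obtain A3 where A3: "is_walk E A3" "hd A3 = z" "\<forall>k. k < length A3 - 1 \<longrightarrow> f (A3 ! k) = 0"
     "f (last A3) \<noteq> 0" "(a3, last A3) \<in> ?R"
      using closure_z[OF assms(1) a3(1)] z a3 True by auto
    have "(f (last A1) * sp \<sigma> A1 0 (length A1 - 1)) * (f (last A2) * sp \<sigma> A2 0 (length A2 - 1)) > 0 \<or>
          (f (last A1) * sp \<sigma> A1 0 (length A1 - 1)) * (f (last A3) * sp \<sigma> A3 0 (length A3 - 1)) > 0 \<or>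
          (f (last A2) * sp \<sigma> A2 0 (length A2 - 1)) * (f (last A3) * sp \<sigma> A3 0 (length A3 - 1)) > 0"
      by (rule three_signs) (use sgn_nz[OF assms(1)] A1 A2 A3 in auto)
    then show False
    proof (elim disjE)
      assume p: "(f (last A1) * sp \<sigma> A1 0 (length A1 - 1)) * (f (last A2) * sp \<sigma> A2 0 (length A2 - 1)) > 0"
      show False using join[OF assms(1) A1 A2 p] d12 by simp
    next
      assume p: "(f (last A1) * sp \<sigma> A1 0 (length A1 - 1)) * (f (last A3) * sp \<sigma> A3 0 (length A3 - 1)) > 0"
      show False using join[OF assms(1) A1 A3 p] d13 by simp
    next
      assume p: "(f (last A2) * sp \<sigma> A2 0 (length A2 - 1)) * (f (last A3) * sp \<sigma> A3 0 (length A3 - 1)) > 0"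
      show False using join[OF assms(1) A2 A3 p] d23 by simp
    qed
  qed
qed

end
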